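(* Let $P$ be a poset on $[n]$ with natural labeling. For every $1\le j\le n-1$, the operator $\tau_j$ on $\mathcal{L}(P)$ can be expressed as a product (composite) of extended promotion operators $\partial_1,\dots,\partial_n$.
   Context: $\mathcal{L}(P)=\{\pi\in S_n : i\prec j \Rightarrow \pi^{-1}_i<\pi^{-1}_j\}$ in one-line notation $\pi=\pi_1\cdots\pi_n$. For $1\le i<n$, $\pi\tau_i$ swaps $\pi_i,\pi_{i+1}$ if they are incomparable in $P$ and is $\pi$ otherwise; operators act on the right, $\pi(\sigma\tau)=(\pi\sigma)\tau$. Extended promotion: $\partial_j=\tau_j\tau_{j+1}\cdots\tau_{n-1}$ for $1\le j\le n$. *)

theory Defs
  imports Main
begin

text \<open>A poset P on [n] = {1..n} is given by its (reflexive) order relation P.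
  Permutations of [n] are lists in one-line notation: position p (0-based)
  of the list holds pi_(p+1).\<close>

definition is_poset_on :: "nat \<Rightarrow> nat rel \<Rightarrow> bool" where
  "is_poset_on n P \<longleftrightarrow> P \<subseteq> {1..n} \<times> {1..n} \<and> partial_order_on {1..n} P"

definition natural_labeling :: "nat rel \<Rightarrow> bool" where
  "natural_labeling P \<longleftrightarrow> (\<forall>i j. (i, j) \<in> P \<longrightarrow> i \<le> j)"

definition perms :: "nat \<Rightarrow> nat list set" where
  "perms n = {\<pi>. distinct \<pi> \<and> set \<pi> = {1..n}}"

definition linext :: "nat \<Rightarrow> nat rel \<Rightarrow> nat list set" where
  "linext n P = {\<pi> \<in> perms n. \<forall>p q. p < length \<pi> \<longrightarrow> q < length \<pi> \<longrightarrow>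
       (\<pi> ! p, \<pi> ! q) \<in> P \<longrightarrow> \<pi> ! p \<noteq> \<pi> ! q \<longrightarrow> p < q}"

definition comparable :: "nat rel \<Rightarrow> nat \<Rightarrow> nat \<Rightarrow> bool" where
  "comparable P a b \<longleftrightarrow> (a, b) \<in> P \<or> (b, a) \<in> P"

text \<open>tau_i (1-based i): swap pi_i and pi_(i+1) if they are incomparable.\<close>
definition tau :: "nat rel \<Rightarrow> nat \<Rightarrow> nat list \<Rightarrow> nat list" where
  "tau P i \<pi> = (if comparable P (\<pi> ! (i - 1)) (\<pi> ! i) then \<pi>
     else \<pi>[i - 1 := \<pi> ! i, i := \<pi> ! (i - 1)])"

text \<open>Extended promotion partial_j = tau_j tau_(j+1) ... tau_(n-1), acting on the right
  (tau_j is applied first).\<close>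
definition ext_prom :: "nat \<Rightarrow> nat rel \<Rightarrow> nat \<Rightarrow> nat list \<Rightarrow> nat list" where
  "ext_prom n P j \<pi> = fold (tau P) [j..<n] \<pi>"

end

theory Submission
  imports Defs "HOL-Combinatorics.Combinatorics"
begin

lemma tau_len: "length (tau P i \<pi>) = length \<pi>"
  by (simp add: tau_def)

lemma tau_set: assumes "1 \<le> i" "i < length \<pi>" shows "set (tau P i \<pi>) = set \<pi>"
proof -
  have "set (\<pi>[i - 1 := \<pi> ! i, i := \<pi> ! (i - 1)]) = set \<pi>"
    using assms by (metis Suc_diff_1 Suc_le_lessD less_imp_diff_less set_swap)
  then show ?thesis by (simp add: tau_def)
qed

lemma tau_invol: assumes "1 \<le> i" "i < length \<pi>" shows "tau P i (tau P i \<pi>) = \<pi>"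
  using assms unfolding tau_def comparable_def
  by (auto simp: nth_list_update list_update_swap list_update_overwrite intro!: nth_equalityI)

lemma fold_tau_len: "length (fold (tau P) is \<pi>) = length \<pi>"
  by (induction "is" arbitrary: \<pi>) (auto simp: tau_len)

lemma fold_tau_set: "\<forall>i\<in>set is. 1 \<le> i \<and> i < length \<pi> \<Longrightarrow> set (fold (tau P) is \<pi>) = set \<pi>"
  by (induction "is" arbitrary: \<pi>) (auto simp: tau_set tau_len)

lemma fold_tau_inv: "\<forall>i\<in>set is. 1 \<le> i \<and> i < length \<pi> \<Longrightarrow> fold (tau P) (rev is) (fold (tau P) is \<pi>) = \<pi>"
  by (induction "is" arbitrary: \<pi>) (auto simp: tau_invol tau_len)

lemma funpow_agree:
  assumes "\<forall>x\<in>A. f x \<in> A" "\<forall>x\<in>A. g x = f x" "x \<in> A"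
  shows "(g ^^ k) x = (f ^^ k) x \<and> (f ^^ k) x \<in> A"
  using assms(3) by (induction k) (auto simp: assms(1,2))

lemma fold_replicate_pow: "fold f (replicate k a) x = (f a ^^ k) x"
  by (induction k arbitrary: x) (auto simp: funpow_swap1)

theorem lemma2p2:
  fixes n j :: nat and P :: "nat rel"
  assumes "is_poset_on n P" and "natural_labeling P"
    and "1 \<le> j" and "j \<le> n - 1"
  shows "\<exists>ks. set ks \<subseteq> {1..n} \<and>
           (\<forall>\<pi> \<in> linext n P. tau P j \<pi> = fold (ext_prom n P) ks \<pi>)"
proof -
  define A where "A = {\<pi>::nat list. set \<pi> \<subseteq> {1..n} \<and> length \<pi> = n}"
  have finA: "finite A" unfolding A_def
    using finite_lists_length_eq[of "{1..n}" n] by simp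
  define d where "d = ext_prom n P (Suc j)"
  have rng: "\<forall>i\<in>set [Suc j..<n]. 1 \<le> i \<and> i < n" by auto
  have dA: "\<forall>x\<in>A. d x \<in> A"
    using rng unfolding A_def d_def ext_prom_def
    by (auto simp: fold_tau_len fold_tau_set)
  have dinj: "inj_on d A"
  proof (rule inj_on_inverseI)
    fix x assume "x \<in> A"
    then show "fold (tau P) (rev [Suc j..<n]) (d x) = x"
      unfolding d_def ext_prom_def A_def using rng fold_tau_inv by auto
  qed
  have dimg: "d ` A = A" using endo_inj_surj[OF finA _ dinj] dA by blast
  define g where "g x = (if x \<in> A then d x else x)" for x
  have "bij_betw g A A"
    using dinj dimg unfolding bij_betw_def g_def inj_on_def by (auto simp: image_def)
  then have "g permutes A" by (rule bij_imp_permutes) (simp add: g_def)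
  then have "permutation g" using finA permutation_permutes by blast
  then obtain m where m: "(g ^^ m) = id" "m > 0" by (rule permutation_is_nilpotent)
  have gd: "\<forall>x\<in>A. g x = d x" by (simp add: g_def)
  have dm: "(d ^^ m) x = x" if "x \<in> A" for x
    using funpow_agree[OF dA gd that, of m] m by simp
  show ?thesis
  proof (intro exI conjI ballI)
    show "set (j # replicate (m - 1) (Suc j)) \<subseteq> {1..n}" using assms(3,4) by auto
  next
    fix \<pi> assume "\<pi> \<in> linext n P"
    then have ps: "distinct \<pi>" "set \<pi> = {1..n}" by (auto simp: linext_def perms_def)
    then have len: "length \<pi> = n" by (metis card_atLeastAtMost diff_Suc_1 distinct_card)
    have jn: "j < n" using assms(3,4) by linarith
    let ?y = "tau P j \<pi>"
    have yA: "?y \<in> A" unfolding A_def using ps len jn assms(3) by (simp add: tau_len tau_set)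
    have "[j..<n] = j # [Suc j..<n]" using jn by (simp add: upt_rec)
    then have ej: "ext_prom n P j \<pi> = d ?y" by (simp add: ext_prom_def d_def)
    have "fold (ext_prom n P) (j # replicate (m - 1) (Suc j)) \<pi> = (d ^^ (m - 1)) (d ?y)"
      by (simp add: ej fold_replicate_pow d_def)
    also have "\<dots> = (d ^^ m) ?y" using m(2)
      by (metis Suc_diff_1 comp_apply funpow_Suc_right)
    also have "\<dots> = ?y" using dm yA by simp
    finally show "tau P j \<pi> = fold (ext_prom n P) (j # replicate (m - 1) (Suc j)) \<pi>" by simp
  qed
qed

end
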